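(* Let $A$ be an $n\times n$ real matrix whose eigenvalues are distinct. Then the following are equivalent: (i) there exists a vector $B_v\in\mathbb{R}^n$ with at most $k$ nonzero entries such that the system $\frac{dx(t)}{dt}=Ax(t)+B_v u(t)$ is controllable; (ii) there exists a real $n\times n$ diagonal matrix $B_d$ with at most $k$ nonzero entries such that the system $\frac{dx(t)}{dt}=Ax(t)+B_d u(t)$ is controllable.
   Context: Controllability refers to the usual notion for continuous-time linear time-invariant systems $\frac{dx}{dt}=Ax+Bu$ (controllability of the pair $(A,B)$). A vector or matrix is called $k$-sparse if it has at most $k$ nonzero entries; the paper phrases (i) as "the system $\Sigma_v$ is $k$-sparse controllable" and (ii) as "the system $\Sigma_d$ is $k$-sparse controllable". *)

theory Defs
  imports "HOL-Analysis.Analysis"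
begin

definition controllable :: "real^'n^'n \<Rightarrow> real^'m^'n \<Rightarrow> bool" where
  "controllable A B \<longleftrightarrow>
     (\<forall>x0 x1. \<exists>T>0. \<exists>(u::real \<Rightarrow> real^'m) (x::real \<Rightarrow> real^'n).
        x 0 = x0 \<and> x T = x1 \<and>
        (\<forall>t\<in>{0..T}. (x has_vector_derivative (A *v x t + B *v u t)) (at t within {0..T})))"

definition complex_eigenvalues :: "real^'n^'n \<Rightarrow> complex set" where
  "complex_eigenvalues A =
     {c. \<exists>v::complex^'n. v \<noteq> 0 \<and>
          (\<chi> i. \<Sum>j\<in>UNIV. complex_of_real (A $ i $ j) * v $ j) = (\<chi> i. c * v $ i)}"

definition distinct_eigenvalues :: "real^'n^'n \<Rightarrow> bool" where
  "distinct_eigenvalues A \<longleftrightarrow> card (complex_eigenvalues A) = CARD('n)"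

definition sparse_vec :: "nat \<Rightarrow> real^'n \<Rightarrow> bool" where
  "sparse_vec k b \<longleftrightarrow> card {i. b $ i \<noteq> 0} \<le> k"

definition sparse_mat :: "nat \<Rightarrow> real^'m^'n \<Rightarrow> bool" where
  "sparse_mat k B \<longleftrightarrow> card {(i, j). B $ i $ j \<noteq> 0} \<le> k"

definition diagonal_mat :: "real^'n^'n \<Rightarrow> bool" where
  "diagonal_mat D \<longleftrightarrow> (\<forall>i j. i \<noteq> j \<longrightarrow> D $ i $ j = 0)"

text \<open>A vector b viewed as an n x 1 input matrix (scalar input).\<close>
definition column :: "real^'n \<Rightarrow> real^1^'n" where
  "column b = (\<chi> i j. b $ i)"

end

theory Submission
  imports Defs "HOL-Computational_Algebra.Polynomial"
begin


lemma pd_add: "(pderiv ^^ j) (p + q) = (pderiv ^^ j) p + (pderiv ^^ j) (q::real poly)"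
  by (induction j) (auto simp: pderiv_add)

lemma pd_smult: "(pderiv ^^ j) (smult c p) = smult c ((pderiv ^^ j) (p::real poly))"
  by (induction j) (auto simp: pderiv_smult)

lemma pderiv_lin_pow:
  fixes q :: "real poly"
  assumes "pderiv q = 1"
  shows "pderiv (q^(Suc m) * s) = q^m * (q * pderiv s + smult (of_nat (Suc m)) s)"
proof -
  have "pderiv (q^(Suc m) * s) = q^(Suc m) * pderiv s + s * (smult (of_nat (Suc m)) (q^m) * pderiv q)"
    by (simp only: pderiv_mult pderiv_power_Suc)
  also have "\<dots> = q^m * (q * pderiv s + smult (of_nat (Suc m)) s)"
    using assms by (simp add: algebra_simps)
  finally show ?thesis .
qed

lemma dlin: "pderiv [:-a,1:] = (1::real poly)"
  by (simp add: pderiv_pCons)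

lemma pd_factor:
  fixes a :: real
  shows "j \<le> m \<Longrightarrow> \<exists>s'. (pderiv ^^ j) ([:-a,1:]^m * s) = [:-a,1:]^(m-j) * s'"
proof (induction j)
  case 0 then show ?case by auto
next
  case (Suc j)
  then obtain s' where s': "(pderiv ^^ j) ([:-a,1:]^m * s) = [:-a,1:]^(m-j) * s'" by auto
  from Suc.prems obtain m' where m': "m - j = Suc m'" "m - Suc j = m'"
    by (metis Suc_diff_Suc Suc_le_lessD)
  have "(pderiv ^^ Suc j) ([:-a,1:]^m * s) = pderiv ([:-a,1:]^(Suc m') * s')"
    using s' m' by simp
  also have "\<dots> = [:-a,1:]^m' * ([:-a,1:] * pderiv s' + smult (of_nat (Suc m')) s')"
    by (rule pderiv_lin_pow[OF dlin])
  finally show ?case using m' by auto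
qed

lemma pd_vanish:
  fixes a :: real
  shows "j < m \<Longrightarrow> poly ((pderiv ^^ j) ([:-a,1:]^m * s)) a = 0"
  using pd_factor[of j m a s] by auto

lemma pd_top:
  fixes a :: real
  shows "poly ((pderiv ^^ N) ([:-a,1:]^N * s)) a = fact N * poly s a"
proof (induction N arbitrary: s)
  case 0 then show ?case by simp
next
  case (Suc N)
  have "pderiv ([:-a,1:]^(Suc N) * s) = [:-a,1:]^N * (smult (of_nat (Suc N)) s + [:-a,1:] * pderiv s)"
    using pderiv_lin_pow[OF dlin, of a N s] by (simp add: add.commute)
  then have "(pderiv ^^ Suc N) ([:-a,1:]^(Suc N) * s) =
     (pderiv ^^ N) ([:-a,1:]^N * (smult (of_nat (Suc N)) s + [:-a,1:] * pderiv s))"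
    by (simp add: funpow_Suc_right del: funpow.simps)
  then show ?case using Suc by simp
qed

lemma hermite1:
  fixes a b :: real
  assumes "a \<noteq> b"
  shows "\<exists>p. (\<exists>s. p = [:-b,1:]^m * s) \<and> (\<forall>j<N. poly ((pderiv ^^ j) p) a = \<eta> j)"
proof (induction N)
  case 0 then show ?case by (auto intro: exI[of _ 0])
next
  case (Suc N)
  then obtain p s where p: "p = [:-b,1:]^m * s" "\<forall>j<N. poly ((pderiv ^^ j) p) a = \<eta> j" by auto
  define c where "c = (\<eta> N - poly ((pderiv ^^ N) p) a) / (fact N * (a-b)^m)"
  define q where "q = [:-a,1:]^N * [:-b,1:]^m"
  have nz: "fact N * (a-b)^m \<noteq> 0" using assms by simp
  have qN: "poly ((pderiv ^^ N) q) a = fact N * (a-b)^m"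
    unfolding q_def by (simp add: pd_top poly_power)
  have qj: "j < N \<Longrightarrow> poly ((pderiv ^^ j) q) a = 0" for j
    unfolding q_def by (rule pd_vanish)
  show ?case
  proof (intro exI conjI allI impI)
    show "p + smult c q = [:-b,1:]^m * (s + smult c ([:-a,1:]^N))"
      by (simp add: p q_def algebra_simps)
    fix j assume "j < Suc N"
    then consider "j < N" | "j = N" by linarith
    then show "poly ((pderiv ^^ j) (p + smult c q)) a = \<eta> j"
    proof cases
      case 1 then show ?thesis using p qj by (simp add: pd_add pd_smult)
    next
      case 2 then show ?thesis using nz qN by (simp add: pd_add pd_smult c_def)
    qed
  qed
qed

lemma hermite2:
  "\<exists>p::real poly. \<forall>j<m. poly ((pderiv ^^ j) p) 0 = \<eta> j \<and> poly ((pderiv ^^ j) p) 1 = \<zeta> j"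
proof -
  obtain p0 s0 where p0: "p0 = [:-1,1:]^m * s0" "\<forall>j<m. poly ((pderiv ^^ j) p0) 0 = \<eta> j"
    using hermite1[of 0 1 m m \<eta>] by auto
  obtain p1 s1 where p1: "p1 = [:-0,1:]^m * s1" "\<forall>j<m. poly ((pderiv ^^ j) p1) 1 = \<zeta> j"
    using hermite1[of 1 0 m m \<zeta>] by auto
  have "\<forall>j<m. poly ((pderiv ^^ j) (p0+p1)) 0 = \<eta> j \<and> poly ((pderiv ^^ j) (p0+p1)) 1 = \<zeta> j"
    using p0 p1 pd_vanish[of _ m 0 s1] pd_vanish[of _ m 1 s0] by (simp add: pd_add)
  then show ?thesis by blast
qed


lemma span_image_sum:
  fixes f :: "'i \<Rightarrow> 'a::real_vector"
  assumes "finite I" "x \<in> span (f ` I)"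
  shows "\<exists>c. x = (\<Sum>i\<in>I. c i *\<^sub>R f i)"
proof -
  let ?T = "{y. \<exists>c. y = (\<Sum>i\<in>I. c i *\<^sub>R f i)}"
  have "subspace ?T"
    unfolding subspace_def
  proof (intro conjI ballI allI)
    show "0 \<in> ?T" by (auto intro!: exI[of _ "\<lambda>_. 0"])
    fix y z assume "y \<in> ?T" "z \<in> ?T"
    then obtain c d where "y = (\<Sum>i\<in>I. c i *\<^sub>R f i)" "z = (\<Sum>i\<in>I. d i *\<^sub>R f i)" by auto
    then show "y + z \<in> ?T"
      by (auto intro!: exI[of _ "\<lambda>i. c i + d i"] simp: sum.distrib scaleR_add_left)
  next
    fix y and a :: real assume "y \<in> ?T"
    then obtain c where "y = (\<Sum>i\<in>I. c i *\<^sub>R f i)" by auto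
    then show "a *\<^sub>R y \<in> ?T"
      by (auto intro!: exI[of _ "\<lambda>i. a * c i"] simp: scaleR_sum_right)
  qed
  moreover have "f ` I \<subseteq> ?T"
  proof
    fix y assume "y \<in> f ` I"
    then obtain i0 where i0: "i0 \<in> I" "y = f i0" by auto
    have "(\<Sum>i\<in>I. (if i = i0 then 1 else 0) *\<^sub>R f i) = (\<Sum>i\<in>I. if i = i0 then f i else 0)"
      by (intro sum.cong) auto
    also have "\<dots> = f i0" using assms(1) i0(1) by simp
    finally have "(\<Sum>i\<in>I. (if i = i0 then 1 else 0) *\<^sub>R f i) = f i0" .
    then show "y \<in> ?T" using i0 by (auto intro!: exI[of _ "\<lambda>i. if i = i0 then 1 else 0"])
  qed
  ultimately have "span (f ` I) \<subseteq> ?T" by (metis span_minimal)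
  then show ?thesis using assms(2) by auto
qed

lemma mv_sum: "(A::real^'n^'m) *v (\<Sum>j\<in>J. c j *\<^sub>R v j) = (\<Sum>j\<in>J. c j *\<^sub>R (A *v v j))"
  by (simp add: linear_sum[OF matrix_vector_mul_linear] linear_scale[OF matrix_vector_mul_linear])

lemma column_mult: "column b *v u = (u $ 1) *\<^sub>R b"
  by (simp add: column_def matrix_vector_mult_def vec_eq_iff mult.commute UNIV_1)

lemma suff:
  fixes A :: "real^'n^'n" and b :: "real^'n"
  defines "K \<equiv> \<lambda>i. ((*v) A ^^ i) b"
  assumes span: "span (K ` {..<CARD('n)}) = UNIV"
  shows "controllable A (column b)"
proof -
  define n where "n = CARD('n)"
  have "n > 0" unfolding n_def by simp
  then obtain m where nm: "n = Suc m" using gr0_implies_Suc by blast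
  have KS: "K (Suc i) = A *v K i" for i unfolding K_def by simp
  have K0: "K 0 = b" unfolding K_def by simp
  obtain \<alpha> where \<alpha>: "K n = (\<Sum>i<n. \<alpha> i *\<^sub>R K i)"
    using span_image_sum[of "{..<n}" "K n" K] span unfolding n_def by auto
  define \<beta> where "\<beta> i = (if i = n then 1 else - \<alpha> i)" for i
  define R where "R j = (\<Sum>i\<in>{j..n}. \<beta> i *\<^sub>R K (i - j))" for j
  have R0: "R 0 = 0"
  proof -
    have "R 0 = (\<Sum>i\<le>n. \<beta> i *\<^sub>R K i)" unfolding R_def by (simp add: atLeast0AtMost)
    also have "\<dots> = K n + (\<Sum>i<n. (- \<alpha> i) *\<^sub>R K i)"
      by (simp add: \<beta>_def lessThan_Suc_atMost[symmetric] cong: if_cong)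
    also have "\<dots> = 0" using \<alpha> by (simp add: sum_negf)
    finally show ?thesis .
  qed
  have Rn: "R n = b" unfolding R_def \<beta>_def by (simp add: K0)
  have AR: "A *v R (Suc j) = R j - \<beta> j *\<^sub>R b" if "j < n" for j
  proof -
    have "A *v R (Suc j) = (\<Sum>i\<in>{Suc j..n}. \<beta> i *\<^sub>R K (i - j))"
      unfolding R_def mv_sum
      by (intro sum.cong refl) (simp add: KS[symmetric] Suc_diff_Suc)
    also have "\<dots> = R j - \<beta> j *\<^sub>R b"
      unfolding R_def using that by (simp add: sum.atLeast_Suc_atMost K0)
    finally show ?thesis .
  qed
  define S where "S = (\<lambda>j. R (Suc j)) ` {..<n}"
  have Sspan: "span S = UNIV"
  proof -
    have bS: "b \<in> span S" using Rn nm unfolding S_def by (auto intro!: span_base)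
    have AS: "A *v v \<in> span S" if "v \<in> span S" for v
    proof -
      have "A *v v \<in> (*v) A ` span S" using that by auto
      also have "\<dots> = span ((*v) A ` S)" by (simp add: span_linear_image matrix_vector_mul_linear)
      also have "\<dots> \<subseteq> span S"
      proof (rule span_minimal[OF _ subspace_span], rule)
        fix y assume "y \<in> (*v) A ` S"
        then obtain j where j: "j < n" "y = A *v R (Suc j)" unfolding S_def by auto
        have Rj: "R j \<in> span S"
        proof (cases j)
          case 0 then show ?thesis using R0 by (simp add: span_zero)
        next
          case (Suc j') then show ?thesis using j unfolding S_def by (auto intro!: span_base)
        qed
        show "y \<in> span S" using j AR[OF j(1)] Rj bS by (simp add: span_diff span_scale)
      qed
      finally show ?thesis .
    qed
    have "K i \<in> span S" for i
      by (induction i) (auto simp: K0 KS bS AS)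
    then have "span (K ` {..<n}) \<subseteq> span S" by (intro span_minimal) (auto simp: subspace_span)
    then show ?thesis using span unfolding n_def by auto
  qed
  show ?thesis
    unfolding controllable_def
  proof (intro allI)
    fix x0 x1 :: "real^'n"
    have fin: "finite {..<n}" by simp
    obtain \<eta> where \<eta>: "x0 = (\<Sum>j<n. \<eta> j *\<^sub>R R (Suc j))"
      using span_image_sum[OF fin, of x0 "\<lambda>j. R (Suc j)"] Sspan unfolding S_def by auto
    obtain \<zeta> where \<zeta>: "x1 = (\<Sum>j<n. \<zeta> j *\<^sub>R R (Suc j))"
      using span_image_sum[OF fin, of x1 "\<lambda>j. R (Suc j)"] Sspan unfolding S_def by auto
    obtain p where p: "\<forall>j<n. poly ((pderiv ^^ j) p) 0 = \<eta> j \<and> poly ((pderiv ^^ j) p) 1 = \<zeta> j"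
      using hermite2 by blast
    define y where "y j t = poly ((pderiv ^^ j) p) t" for j t
    define x where "x t = (\<Sum>j<n. y j t *\<^sub>R R (Suc j))" for t
    define u where "u t = (\<chi> _::1. y n t + (\<Sum>j<n. \<beta> j * y j t))" for t
    have yd: "(y j has_field_derivative y (Suc j) t) (at t within X)" for j t X
      unfolding y_def using poly_DERIV[of "(pderiv^^j) p" t] by (simp add: has_field_derivative_at_within)
    show "\<exists>T>0. \<exists>u x. x 0 = x0 \<and> x T = x1 \<and>
        (\<forall>t\<in>{0..T}. (x has_vector_derivative A *v x t + column b *v u t) (at t within {0..T}))"
    proof (intro exI[of _ 1] conjI exI[of _ u] exI[of _ x] ballI)
      show "(0::real) < 1" by simp
      show "x 0 = x0" unfolding x_def \<eta> y_def using p by simp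
      show "x 1 = x1" unfolding x_def \<zeta> y_def using p by simp
      fix t :: real assume "t \<in> {0..1}"
      have d: "(x has_vector_derivative (\<Sum>j<n. y (Suc j) t *\<^sub>R R (Suc j))) (at t within {0..1})"
        unfolding x_def
        by (rule has_vector_derivative_sum) (auto intro!: has_vector_derivative_scaleR[OF yd, THEN has_vector_derivative_eq_rhs] has_vector_derivative_const)
      have "A *v x t = (\<Sum>j<n. y j t *\<^sub>R (R j - \<beta> j *\<^sub>R b))"
        unfolding x_def mv_sum by (intro sum.cong refl) (simp add: AR)
      also have "\<dots> = (\<Sum>j<n. y j t *\<^sub>R R j) - (\<Sum>j<n. \<beta> j * y j t) *\<^sub>R b"
        by (simp add: scaleR_diff_right sum_subtractf scaleR_sum_left mult.commute)
      also have "(\<Sum>j<n. y j t *\<^sub>R R j) = (\<Sum>j<m. y (Suc j) t *\<^sub>R R (Suc j))"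
        unfolding nm sum.lessThan_Suc_shift by (simp add: R0)
      finally have Ax: "A *v x t = (\<Sum>j<m. y (Suc j) t *\<^sub>R R (Suc j)) - (\<Sum>j<n. \<beta> j * y j t) *\<^sub>R b" .
      have "(\<Sum>j<n. y (Suc j) t *\<^sub>R R (Suc j)) = (\<Sum>j<m. y (Suc j) t *\<^sub>R R (Suc j)) + y n t *\<^sub>R b"
        using Rn nm by simp
      also have "\<dots> = A *v x t + column b *v u t"
        unfolding Ax column_mult u_def by (simp add: scaleR_add_left)
      finally show "(x has_vector_derivative A *v x t + column b *v u t) (at t within {0..1})"
        using d by simp
    qed
  qed
qed


definition cf :: "complex^'n \<Rightarrow> real^'n \<Rightarrow> complex" where
  "cf w v = (\<Sum>l\<in>UNIV. w $ l * of_real (v $ l))"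

lemma cf_bl: "bounded_linear (cf w)"
proof -
  have "linear (cf w)"
  proof (rule linearI)
    fix a b :: "real^'a"
    show "cf w (a + b) = cf w a + cf w b" by (simp add: cf_def sum.distrib distrib_left)
  next
    fix r :: real and b :: "real^'a"
    have "cf w (r *\<^sub>R b) = (\<Sum>l\<in>UNIV. of_real r * (w $ l * of_real (b $ l)))"
      unfolding cf_def by (intro sum.cong refl) (simp add: ac_simps)
    also have "\<dots> = r *\<^sub>R cf w b" by (simp add: cf_def sum_distrib_left scaleR_conv_of_real)
    finally show "cf w (r *\<^sub>R b) = r *\<^sub>R cf w b" .
  qed
  then show ?thesis by (simp add: linear_conv_bounded_linear)
qed

lemma cf_mv:
  fixes M :: "real^'m^'n"
  shows "cf w (M *v v) = (\<Sum>j\<in>UNIV. (\<Sum>l\<in>UNIV. w $ l * of_real (M $ l $ j)) * of_real (v $ j))"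
  unfolding cf_def matrix_vector_mult_def
  by (simp add: of_real_sum sum_distrib_left sum_distrib_right mult.assoc)
     (rule sum.swap)

lemma necess:
  fixes A :: "real^'n^'n" and B :: "real^'m^'n" and w :: "complex^'n"
  assumes ctrl: "controllable A B" and w0: "w \<noteq> 0"
    and lev: "\<And>m. (\<Sum>l\<in>UNIV. w $ l * of_real (A $ l $ m)) = lam * w $ m"
    and orth: "\<And>j. (\<Sum>l\<in>UNIV. w $ l * of_real (B $ l $ j)) = 0"
  shows False
proof -
  obtain m0 where m0: "w $ m0 \<noteq> 0" using w0 by (auto simp: vec_eq_iff)
  obtain T u x where T: "T > 0" "x 0 = 0" "x T = axis m0 1"
    and d: "\<And>t. t \<in> {0..T} \<Longrightarrow> (x has_vector_derivative (A *v x t + B *v u t)) (at t within {0..T})"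
    using ctrl unfolding controllable_def by (metis (no_types, lifting))
  have cfA: "cf w (A *v v) = lam * cf w v" for v
    unfolding cf_mv lev by (simp add: cf_def sum_distrib_left mult.assoc)
  have cfB: "cf w (B *v v) = 0" for v :: "real^'m"
    unfolding cf_mv orth by simp
  define z where "z t = exp (t *\<^sub>R (-lam)) * cf w (x t)" for t
  have "(z has_vector_derivative 0) (at t within {0..T})" if "t \<in> {0..T}" for t
  proof -
    have dy: "((\<lambda>t. cf w (x t)) has_vector_derivative lam * cf w (x t)) (at t within {0..T})"
      using bounded_linear.has_vector_derivative[OF cf_bl[of w] d[OF that]]
      by (simp add: linear_add[OF bounded_linear.linear[OF cf_bl[of w]]] cfA cfB)
    show ?thesis unfolding z_def
      by (rule has_vector_derivative_eq_rhs[OF has_vector_derivative_mult[OF exp_scaleR_has_vector_derivative_right[of "-lam" t "{0..T}"] dy]])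
         (simp add: algebra_simps)
  qed
  then obtain c where c: "\<And>t. t \<in> {0..T} \<Longrightarrow> z t = c"
    using has_vector_derivative_zero_constant[of "{0..T}" z] by auto
  have "z 0 = 0" unfolding z_def T cf_def by simp
  moreover have "z T \<noteq> 0" unfolding z_def T cf_def using m0
    by (simp add: axis_def if_distrib cong: if_cong)
  ultimately show False using c[of 0] c[of T] T(1) by auto
qed


lemma vandermonde:
  fixes lam :: "'n::finite \<Rightarrow> complex" and \<gamma> :: "'n \<Rightarrow> complex"
  assumes inj: "inj lam" and z: "\<And>k. k < CARD('n) \<Longrightarrow> (\<Sum>i\<in>UNIV. \<gamma> i * lam i ^ k) = 0"
  shows "\<gamma> j = 0"
proof -
  define L where "L = (\<Prod>i\<in>UNIV - {j}. [:-lam i, 1:])"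
  have "degree L = (\<Sum>i\<in>UNIV - {j}. degree [:-lam i, 1:])"
    unfolding L_def by (rule degree_prod_sum_eq) auto
  also have "\<dots> = CARD('n) - 1" by simp
  finally have dL: "degree L < CARD('n)" by simp
  have "(\<Sum>i\<in>UNIV. \<gamma> i * poly L (lam i)) = (\<Sum>i\<in>UNIV. \<Sum>k\<le>degree L. coeff L k * (\<gamma> i * lam i ^ k))"
    by (simp add: poly_altdef sum_distrib_left ac_simps)
  also have "\<dots> = (\<Sum>k\<le>degree L. coeff L k * (\<Sum>i\<in>UNIV. \<gamma> i * lam i ^ k))"
    by (subst sum.swap) (simp add: sum_distrib_left)
  also have "\<dots> = 0" using dL z by (intro sum.neutral) auto
  finally have s0: "(\<Sum>i\<in>UNIV. \<gamma> i * poly L (lam i)) = 0" .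
  have pz: "poly L (lam i) = 0" if "i \<noteq> j" for i
    unfolding L_def poly_prod using that by (intro prod_zero) (auto intro!: bexI[of _ i])
  have "(\<Sum>i\<in>UNIV. \<gamma> i * poly L (lam i)) = (\<Sum>i\<in>UNIV. if i = j then \<gamma> j * poly L (lam j) else 0)"
    by (intro sum.cong) (auto simp: pz)
  then have "(\<Sum>i\<in>UNIV. \<gamma> i * poly L (lam i)) = \<gamma> j * poly L (lam j)" by simp
  moreover have "poly L (lam j) \<noteq> 0"
    unfolding L_def poly_prod using inj by (auto simp: inj_eq)
  ultimately show ?thesis using s0 by simp
qed

definition cmat :: "real^'n^'m \<Rightarrow> complex^'n^'m" where
  "cmat A = (\<chi> i j. complex_of_real (A $ i $ j))"

definition cvec :: "real^'n \<Rightarrow> complex^'n" where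
  "cvec x = (\<chi> i. complex_of_real (x $ i))"

lemma cvec_mv: "cvec (A *v x) = cmat A *v cvec x"
  by (simp add: cvec_def cmat_def matrix_vector_mult_def vec_eq_iff of_real_sum)

lemma mvc_sum:
  fixes M :: "complex^'n^'m"
  shows "M *v (\<Sum>j\<in>J. c j *s v j) = (\<Sum>j\<in>J. c j *s (M *v v j))"
proof -
  have "(M *v (\<Sum>j\<in>J. c j *s v j)) $ i = (\<Sum>j\<in>J. c j *s (M *v v j)) $ i" for i
    by (simp add: matrix_vector_mult_def sum_component sum_distrib_left ac_simps)
       (rule sum.swap)
  then show ?thesis by (simp add: vec_eq_iff)
qed

lemma lin_sum:
  fixes p :: "complex^'n"
  shows "(\<Sum>m\<in>UNIV. p $ m * (\<Sum>j\<in>J. c j *s v j) $ m) = (\<Sum>j\<in>J. c j * (\<Sum>m\<in>UNIV. p $ m * v j $ m))"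
  by (simp add: sum_component sum_distrib_left ac_simps) (rule sum.swap)

lemma eigen_setup:
  fixes A :: "real^'n^'n"
  assumes "distinct_eigenvalues A"
  obtains lam :: "'n \<Rightarrow> complex" and v :: "'n \<Rightarrow> complex^'n" and \<phi> :: "'n \<Rightarrow> complex^'n \<Rightarrow> complex"
  where "inj lam" "\<And>i. v i \<noteq> 0" "\<And>i. cmat A *v v i = lam i *s v i"
    "\<And>z. z = (\<Sum>i\<in>UNIV. \<phi> i z *s v i)"
    "\<And>i c. \<phi> i (\<Sum>j\<in>UNIV. c j *s v j) = c i"
    "\<And>i z. \<phi> i z = (\<Sum>m\<in>UNIV. z $ m * \<phi> i (axis m 1))"
proof -
  define E where "E = complex_eigenvalues A"
  have cE: "card E = CARD('n)" using assms unfolding E_def distinct_eigenvalues_def by simp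
  then have "card E > 0" by simp
  then have "finite E" using card_gt_0_iff by blast
  then obtain lam :: "'n \<Rightarrow> complex" where lam: "bij_betw lam UNIV E"
    using finite_same_card_bij[of "UNIV::'n set" E] cE by auto
  have "\<forall>i. \<exists>v. v \<noteq> 0 \<and> cmat A *v v = lam i *s v"
  proof
    fix i
    have "lam i \<in> E" using lam by (auto simp: bij_betw_def)
    then obtain v :: "complex^'n" where "v \<noteq> 0"
      "(\<chi> i. \<Sum>j\<in>UNIV. complex_of_real (A $ i $ j) * v $ j) = (\<chi> i'. lam i * v $ i')"
      unfolding E_def complex_eigenvalues_def by auto
    then show "\<exists>v. v \<noteq> 0 \<and> cmat A *v v = lam i *s v"
      by (intro exI[of _ v]) (simp add: cmat_def matrix_vector_mult_def vec_eq_iff)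
  qed
  from choice[OF this] obtain v where v': "\<forall>i. v i \<noteq> 0 \<and> cmat A *v v i = lam i *s v i" by blast
  then have v: "\<And>i. v i \<noteq> 0" "\<And>i. cmat A *v v i = lam i *s v i" by auto
  have injl: "inj lam" using lam by (simp add: bij_betw_def)
  have injv: "inj v"
  proof (rule injI)
    fix i j assume "v i = v j"
    note ij = this
    have "lam i *s v i = cmat A *v v i" by (rule v(2)[symmetric])
    also have "\<dots> = cmat A *v v j" using ij by simp
    also have "\<dots> = lam j *s v j" by (rule v(2))
    also have "\<dots> = lam j *s v i" using ij by simp
    finally have e: "lam i *s v i = lam j *s v i" .
    have "lam i = lam j \<or> v i = 0" using e by simp
    then have "lam i = lam j" using v(1)[of i] by blast
    then show "i = j" using injl by (simp add: inj_eq)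
  qed
  have indep: "vec.independent (range v)"
  proof (rule vec.independent_if_scalars_zero)
    show "finite (range v)" by simp
    fix f x assume s0: "(\<Sum>x\<in>range v. f x *s x) = 0" and x: "x \<in> range v"
    then obtain i0 where i0: "x = v i0" by auto
    define s where "s k = (\<Sum>i\<in>UNIV. (f (v i) * lam i ^ k) *s v i)" for k
    have "s 0 = 0" using s0 unfolding s_def by (simp add: sum.reindex[OF injv])
    moreover have "s (Suc k) = cmat A *v s k" for k
      unfolding s_def mvc_sum by (simp add: v(2) ac_simps)
    ultimately have sk: "s k = 0" for k by (induction k) auto
    obtain m where m: "v i0 $ m \<noteq> 0" using v(1)[of i0] by (auto simp: vec_eq_iff)
    have "f (v i0) * v i0 $ m = 0"
    proof (rule vandermonde[OF injl, of "\<lambda>i. f (v i) * v i $ m" i0])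
      fix k assume "k < CARD('n)"
      have "s k $ m = 0" using sk by simp
      then show "(\<Sum>i\<in>UNIV. f (v i) * v i $ m * lam i ^ k) = 0"
        unfolding s_def by (simp add: sum_component ac_simps)
    qed
    then show "f x = 0" using m i0 by simp
  qed
  have cardv: "card (range v) = vec.dim (UNIV :: (complex^'n) set)"
    using injv vec_dim_card[where 'a=complex and 'n='n] by (simp add: card_image)
  have spanv: "vec.span (range v) = UNIV"
    using vec.card_eq_dim[of "range v" UNIV] cardv indep by auto
  define \<phi> where "\<phi> i z = vec.representation (range v) z (v i)" for i z
  have insp: "z \<in> vec.span (range v)" for z using spanv by simp
  have ph_sum: "\<phi> i (\<Sum>j\<in>UNIV. c j *s u j) = (\<Sum>j\<in>UNIV. c j * \<phi> i (u j))" for i c u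
    unfolding \<phi>_def
    by (simp add: vec.representation_sum[OF indep insp] vec.representation_scale[OF indep insp])
  show ?thesis
  proof (rule that[of lam v \<phi>])
    show "inj lam" by (rule injl)
    show "\<And>i. v i \<noteq> 0" "\<And>i. cmat A *v v i = lam i *s v i" using v by auto
    fix z
    have "(\<Sum>b\<in>range v. vec.representation (range v) z b *s b) = z"
      by (rule vec.sum_representation_eq[OF indep insp]) auto
    then show "z = (\<Sum>i\<in>UNIV. \<phi> i z *s v i)"
      unfolding \<phi>_def by (simp add: sum.reindex[OF injv])
  next
    fix i c
    have "\<phi> i (\<Sum>j\<in>UNIV. c j *s v j) = (\<Sum>j\<in>UNIV. c j * \<phi> i (v j))" by (rule ph_sum)
    also have "\<dots> = (\<Sum>j\<in>UNIV. c j * (if j = i then 1 else 0))"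
      unfolding \<phi>_def
      by (intro sum.cong refl) (simp add: vec.representation_basis[OF indep] inj_eq[OF injv])
    finally have "\<phi> i (\<Sum>j\<in>UNIV. c j *s v j) = (\<Sum>j\<in>UNIV. c j * (if j = i then 1 else 0))" .
    then show "\<phi> i (\<Sum>j\<in>UNIV. c j *s v j) = c i" by (simp add: if_distrib cong: if_cong)
  next
    fix i z
    show "\<phi> i z = (\<Sum>m\<in>UNIV. z $ m * \<phi> i (axis m 1))"
      using ph_sum[of i "\<lambda>m. z $ m" "\<lambda>m. axis m 1"] by (simp add: basis_expansion)
  qed
qed


lemma dir1:
  fixes A :: "real^'n^'n"
  assumes sp: "sparse_vec k Bv" and c: "controllable A (column Bv)"
  shows "\<exists>Bd::real^'n^'n. diagonal_mat Bd \<and> sparse_mat k Bd \<and> controllable A Bd"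
proof (intro exI conjI)
  define Bd :: "real^'n^'n" where "Bd = (\<chi> i j. if i = j then Bv $ i else 0)"
  show "diagonal_mat Bd" by (simp add: diagonal_mat_def Bd_def)
  have "{(i, j). Bd $ i $ j \<noteq> 0} = (\<lambda>i. (i, i)) ` {i. Bv $ i \<noteq> 0}"
    by (auto simp: Bd_def split: if_splits)
  then have "card {(i, j). Bd $ i $ j \<noteq> 0} = card {i. Bv $ i \<noteq> 0}"
    by (simp add: card_image inj_on_def)
  then show "sparse_mat k Bd" using sp by (simp add: sparse_mat_def sparse_vec_def)
  show "controllable A Bd"
    unfolding controllable_def
  proof (intro allI)
    fix x0 x1 :: "real^'n"
    obtain T u x where T: "T > 0" "x 0 = x0" "x T = x1"
      and d: "\<forall>t\<in>{0..T}. (x has_vector_derivative (A *v x t + column Bv *v u t)) (at t within {0..T})"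
      using c unfolding controllable_def by metis
    have s1: "(\<Sum>j\<in>UNIV. (if i = j then Bv $ i else 0) * a) = Bv $ i * a" for i and a :: real
    proof -
      have "(\<Sum>j\<in>UNIV. (if i = j then Bv $ i else 0) * a) = (\<Sum>j\<in>UNIV. if i = j then Bv $ i * a else 0)"
        by (intro sum.cong) auto
      then show ?thesis by simp
    qed
    have eq: "column Bv *v u t = Bd *v (\<chi> j. u t $ 1)" for t
      unfolding column_mult by (simp add: Bd_def matrix_vector_mult_def vec_eq_iff s1)
    show "\<exists>T>0. \<exists>u x. x 0 = x0 \<and> x T = x1 \<and>
        (\<forall>t\<in>{0..T}. (x has_vector_derivative (A *v x t + Bd *v u t)) (at t within {0..T}))"
      using T d by (intro exI[of _ T] conjI exI[of _ "\<lambda>t. (\<chi> j. u t $ 1)"] exI[of _ x]) (auto simp: eq)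
  qed
qed

lemma dir2:
  fixes A :: "real^'n^'n"
  assumes de: "distinct_eigenvalues A"
    and dg: "diagonal_mat Bd" and sp: "sparse_mat k Bd" and ctrl: "controllable A Bd"
  shows "\<exists>Bv::real^'n. sparse_vec k Bv \<and> controllable A (column Bv)"
proof (rule eigen_setup[OF de])
  fix lam :: "'n \<Rightarrow> complex" and v :: "'n \<Rightarrow> complex^'n" and \<phi> :: "'n \<Rightarrow> complex^'n \<Rightarrow> complex"
  assume injl: "inj lam" and v0: "\<And>i. v i \<noteq> 0"
    and ev: "\<And>i. cmat A *v v i = lam i *s v i"
    and dec: "\<And>z. z = (\<Sum>i\<in>UNIV. \<phi> i z *s v i)"
    and coord: "\<And>i c. \<phi> i (\<Sum>j\<in>UNIV. c j *s v j) = c i"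
    and phl: "\<And>i z. \<phi> i z = (\<Sum>m\<in>UNIV. z $ m * \<phi> i (axis m 1))"
  define w where "w i = (\<chi> m. \<phi> i (axis m 1))" for i
  have phw: "\<phi> i z = (\<Sum>m\<in>UNIV. w i $ m * z $ m)" for i z
    using phl[of i z] by (simp add: w_def mult.commute)
  have phA: "\<phi> i (cmat A *v z) = lam i * \<phi> i z" for i z
  proof -
    have "cmat A *v z = cmat A *v (\<Sum>j\<in>UNIV. \<phi> j z *s v j)" using dec[of z] by simp
    also have "\<dots> = (\<Sum>j\<in>UNIV. (\<phi> j z * lam j) *s v j)"
      unfolding mvc_sum ev by (simp add: ac_simps)
    finally show ?thesis using coord by (simp add: mult.commute)
  qed
  have lev: "(\<Sum>l\<in>UNIV. w i $ l * of_real (A $ l $ m)) = lam i * w i $ m" for i m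
  proof -
    have "(cmat A *v axis m 1) = (\<chi> l. of_real (A $ l $ m))"
      by (simp add: cmat_def matrix_vector_mult_def vec_eq_iff axis_def if_distrib cong: if_cong)
    then have "\<phi> i (cmat A *v axis m 1) = (\<Sum>l\<in>UNIV. w i $ l * of_real (A $ l $ m))"
      by (simp add: phw)
    moreover have "\<phi> i (axis m 1) = w i $ m" by (simp add: w_def)
    ultimately show ?thesis using phA[of i "axis m 1"] by simp
  qed
  have w0: "w i \<noteq> 0" for i
  proof
    assume "w i = 0"
    then have "\<phi> i (\<Sum>j\<in>UNIV. 1 *s v j) = 0" by (simp add: phw)
    then show False using coord[of i "\<lambda>_. 1"] by simp
  qed
  define a where "a i j = (\<Sum>l\<in>UNIV. w i $ l * of_real (Bd $ l $ j))" for i j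
  have anz: "\<exists>j. a i j \<noteq> 0" for i
    using necess[OF ctrl w0 lev] unfolding a_def by blast
  define \<rho> where "\<rho> i = (if (\<chi> j. Re (a i j)) \<noteq> 0 then (\<chi> j. Re (a i j)) else (\<chi> j. Im (a i j)))" for i
  have \<rho>0: "\<rho> i \<noteq> 0" for i
  proof -
    obtain j where "a i j \<noteq> 0" using anz by blast
    then have "Re (a i j) \<noteq> 0 \<or> Im (a i j) \<noteq> 0" using complex_eqI by force
    then show ?thesis unfolding \<rho>_def by (auto simp: vec_eq_iff)
  qed
  define N where "N = (\<Union>i\<in>UNIV. {c::real^'n. \<rho> i \<bullet> c = 0})"
  have fr: "finite (range (\<lambda>i::'n. {c::real^'n. \<rho> i \<bullet> c = 0}))" by simp
  have "negligible N" unfolding N_def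
    by (rule negligible_Union[OF fr]) (auto intro!: negligible_hyperplane \<rho>0)
  then have "N \<noteq> UNIV" using non_negligible_UNIV[where 'a="real^'n"] by auto
  then obtain c where cN: "c \<notin> N" by auto
  have acz: "(\<Sum>j\<in>UNIV. a i j * of_real (c $ j)) \<noteq> 0" for i
  proof
    assume z: "(\<Sum>j\<in>UNIV. a i j * of_real (c $ j)) = 0"
    have "Re (\<Sum>j\<in>UNIV. a i j * of_real (c $ j)) = (\<Sum>j\<in>UNIV. Re (a i j) * c $ j)" by simp
    moreover have "Im (\<Sum>j\<in>UNIV. a i j * of_real (c $ j)) = (\<Sum>j\<in>UNIV. Im (a i j) * c $ j)" by simp
    ultimately have "\<rho> i \<bullet> c = 0" using z unfolding \<rho>_def by (simp add: inner_vec_def)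
    then show False using cN unfolding N_def by auto
  qed
  define b where "b = Bd *v c"
  have bcomp: "b $ l = Bd $ l $ l * c $ l" for l
  proof -
    have "b $ l = (\<Sum>j\<in>UNIV. if j = l then Bd $ l $ l * c $ j else 0)"
      unfolding b_def matrix_vector_mult_def vec_lambda_beta
      by (intro sum.cong refl) (use dg in \<open>auto simp: diagonal_mat_def\<close>)
    then show ?thesis by simp
  qed
  have spb: "sparse_vec k b"
  proof -
    have "{l. b $ l \<noteq> 0} \<subseteq> {l. Bd $ l $ l \<noteq> 0}" by (auto simp: bcomp)
    then have "card {l. b $ l \<noteq> 0} \<le> card {l. Bd $ l $ l \<noteq> 0}" by (intro card_mono) auto
    also have "\<dots> = card ((\<lambda>l. (l, l)) ` {l. Bd $ l $ l \<noteq> 0})" by (simp add: card_image inj_on_def)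
    also have "\<dots> \<le> card {(i, j). Bd $ i $ j \<noteq> 0}" by (intro card_mono) auto
    finally show ?thesis using sp by (simp add: sparse_vec_def sparse_mat_def)
  qed
  have phb: "\<phi> i (cvec b) \<noteq> 0" for i
  proof -
    have "\<phi> i (cvec b) = cf (w i) b" by (simp add: phw cf_def cvec_def)
    also have "\<dots> = (\<Sum>j\<in>UNIV. a i j * of_real (c $ j))" unfolding b_def cf_mv a_def ..
    finally show ?thesis using acz by simp
  qed
  define K where "K i = ((*v) A ^^ i) b" for i
  have cK: "cvec (K k) = (\<Sum>i\<in>UNIV. (\<phi> i (cvec b) * lam i ^ k) *s v i)" for k
  proof (induction k)
    case 0 then show ?case using dec[of "cvec b"] by (simp add: K_def)
  next
    case (Suc k)
    have "cvec (K (Suc k)) = cmat A *v cvec (K k)" by (simp add: K_def cvec_mv)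
    also have "\<dots> = (\<Sum>i\<in>UNIV. (\<phi> i (cvec b) * lam i ^ Suc k) *s v i)"
      unfolding Suc mvc_sum ev by (simp add: ac_simps)
    finally show ?case .
  qed
  have "span (K ` {..<CARD('n)}) = UNIV"
  proof (rule ccontr)
    assume ns: "span (K ` {..<CARD('n)}) \<noteq> UNIV"
    have "dim (K ` {..<CARD('n)}) < DIM(real^'n)"
      using ns eucl.dim_eq_full[of "K ` {..<CARD('n)}"] eucl.dim_subset_UNIV[of "K ` {..<CARD('n)}"] by linarith
    then obtain p :: "real^'n" where p0: "p \<noteq> 0"
      and po: "\<And>y. y \<in> span (K ` {..<CARD('n)}) \<Longrightarrow> orthogonal p y"
      using orthogonal_to_subspace_exists by blast
    define P where "P z = (\<Sum>m\<in>UNIV. of_real (p $ m) * z $ m)" for z :: "complex^'n"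
    have Pc: "P (cvec y) = of_real (p \<bullet> y)" for y
      by (simp add: P_def cvec_def inner_vec_def of_real_sum)
    have Ps: "P (\<Sum>i\<in>UNIV. d i *s v i) = (\<Sum>i\<in>UNIV. d i * P (v i))" for d
      unfolding P_def using lin_sum[where p="\<chi> m. of_real (p $ m)" and J=UNIV and c=d and v=v] by simp
    have Pv: "P (v i) = 0" for i
    proof -
      have "\<phi> i (cvec b) * P (v i) = 0"
      proof (rule vandermonde[OF injl, of "\<lambda>i. \<phi> i (cvec b) * P (v i)" i])
        fix k assume k: "k < CARD('n)"
        have "K k \<in> span (K ` {..<CARD('n)})" using k by (intro span_base) auto
        then have "p \<bullet> K k = 0" using po by (simp add: orthogonal_def)
        then have "P (cvec (K k)) = 0" by (simp add: Pc)
        then show "(\<Sum>i\<in>UNIV. \<phi> i (cvec b) * P (v i) * lam i ^ k) = 0"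
          unfolding cK Ps by (simp add: ac_simps)
      qed
      then show ?thesis using phb by simp
    qed
    have "P (cvec p) = P (\<Sum>i\<in>UNIV. \<phi> i (cvec p) *s v i)" using dec[of "cvec p"] by simp
    also have "\<dots> = 0" unfolding Ps Pv by simp
    finally have "P (cvec p) = 0" .
    then have "p \<bullet> p = 0" by (simp add: Pc)
    then show False using p0 by simp
  qed
  then have "controllable A (column b)" unfolding K_def by (rule suff)
  then show ?thesis using spb by blast
qed

theorem theorem2:
  fixes A :: "real^'n^'n" and k :: nat
  assumes "distinct_eigenvalues A"
  shows "(\<exists>Bv::real^'n. sparse_vec k Bv \<and> controllable A (column Bv)) \<longleftrightarrow>
         (\<exists>Bd::real^'n^'n. diagonal_mat Bd \<and> sparse_mat k Bd \<and> controllable A Bd)"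
  using dir1 dir2[OF assms] by blast


end
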